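(* Assume $A_n$ satisfies (C1) and (C2), and let $\mathbf X\sim\mathbb P_{n,\beta_0,B_0}$ with $(\beta_0,B_0)\in\Theta$. If $T_n(\mathbf X)=\Theta_p(1)$, then with probability tending to one the pseudo-likelihood estimator $(\hat\beta_n,\hat B_n)$ exists and $\|(\hat\beta_n-\beta_0,\hat B_n-B_0)\|=O_p(n^{-1/2})$ under $\mathbb P_{n,\beta_0,B_0}$.
   Context: For each $n$, $A_n$ is a known symmetric $n\times n$ matrix with non-negative entries and zero diagonal. The Ising model is $\mathbb P_{n,\beta,B}(\mathbf X=\mathbf x)=Z_n(\beta,B)^{-1}\exp(\frac{\beta}{2}\mathbf x^\top A_n\mathbf x+B\sum_i x_i)$ on $\{-1,1\}^n$. (C1): there is a constant $\gamma<\infty$ with $\max_{i}\sum_{j}A_n(i,j)\le\gamma$ for all $n$; (C2): $\liminf_n\frac1n\sum_{i,j}A_n(i,j)>0$. $\Theta=\{(\beta,B):\beta>0,B\ne0\}$. $m_i(\mathbf x)=\sum_jA_n(i,j)x_j$, $\bar m(\mathbf x)=\frac1n\sum_i m_i(\mathbf x)$, $T_n(\mathbf x)=\frac1n\sum_i(m_i(\mathbf x)-\bar m(\mathbf x))^2$. $Q_n(\beta,B\mid\mathbf x)=\sum_i m_i(\mathbf x)(x_i-\tanh(\beta m_i(\mathbf x)+B))$, $R_n(\beta,B\mid\mathbf x)=\sum_i(x_i-\tanh(\beta m_i(\mathbf x)+B))$; the pseudo-likelihood estimator $(\hat\beta_n,\hat B_n)$ is the unique root of $(Q_n,R_n)=(0,0)$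 when it exists. $U_n=O_p(V_n)$ means $U_n/V_n$ is tight; $U_n=\Theta_p(V_n)$ means $U_n=O_p(V_n)$ and $V_n=O_p(U_n)$. *)

theory Defs
  imports "HOL-Analysis.Analysis" "HOL-Library.Liminf_Limsup"
begin

text \<open>Matrices: A n i j for i, j < n (entries outside the range are ignored).
Configurations on {-1,1}^n are represented as functions nat => real with values
in {-1,1} on indices < n and 0 elsewhere.\<close>

type_synonym mat_seq = "nat \<Rightarrow> nat \<Rightarrow> nat \<Rightarrow> real"

definition cfgs :: "nat \<Rightarrow> (nat \<Rightarrow> real) set" where
  "cfgs n = {x. (\<forall>i<n. x i = -1 \<or> x i = 1) \<and> (\<forall>i\<ge>n. x i = 0)}"

definition ising_weight :: "mat_seq \<Rightarrow> nat \<Rightarrow> real \<Rightarrow> real \<Rightarrow> (nat \<Rightarrow> real) \<Rightarrow> real" where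
  "ising_weight A n \<beta> B x =
     exp (\<beta> / 2 * (\<Sum>i<n. \<Sum>j<n. x i * A n i j * x j) + B * (\<Sum>i<n. x i))"

definition ising_Z :: "mat_seq \<Rightarrow> nat \<Rightarrow> real \<Rightarrow> real \<Rightarrow> real" where
  "ising_Z A n \<beta> B = (\<Sum>x\<in>cfgs n. ising_weight A n \<beta> B x)"

definition ising_prob :: "mat_seq \<Rightarrow> nat \<Rightarrow> real \<Rightarrow> real \<Rightarrow> ((nat \<Rightarrow> real) \<Rightarrow> bool) \<Rightarrow> real" where
  "ising_prob A n \<beta> B E =
     (\<Sum>x\<in>{x\<in>cfgs n. E x}. ising_weight A n \<beta> B x) / ising_Z A n \<beta> B"

definition m_loc :: "mat_seq \<Rightarrow> nat \<Rightarrow> (nat \<Rightarrow> real) \<Rightarrow> nat \<Rightarrow> real" where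
  "m_loc A n x i = (\<Sum>j<n. A n i j * x j)"

definition m_bar :: "mat_seq \<Rightarrow> nat \<Rightarrow> (nat \<Rightarrow> real) \<Rightarrow> real" where
  "m_bar A n x = (\<Sum>i<n. m_loc A n x i) / real n"

definition T_stat :: "mat_seq \<Rightarrow> nat \<Rightarrow> (nat \<Rightarrow> real) \<Rightarrow> real" where
  "T_stat A n x = (\<Sum>i<n. (m_loc A n x i - m_bar A n x)\<^sup>2) / real n"

definition Q_pl :: "mat_seq \<Rightarrow> nat \<Rightarrow> real \<Rightarrow> real \<Rightarrow> (nat \<Rightarrow> real) \<Rightarrow> real" where
  "Q_pl A n \<beta> B x = (\<Sum>i<n. m_loc A n x i * (x i - tanh (\<beta> * m_loc A n x i + B)))"

definition R_pl :: "mat_seq \<Rightarrow> nat \<Rightarrow> real \<Rightarrow> real \<Rightarrow> (nat \<Rightarrow> real) \<Rightarrow> real" where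
  "R_pl A n \<beta> B x = (\<Sum>i<n. x i - tanh (\<beta> * m_loc A n x i + B))"

definition mple_exists :: "mat_seq \<Rightarrow> nat \<Rightarrow> (nat \<Rightarrow> real) \<Rightarrow> bool" where
  "mple_exists A n x = (\<exists>!p. Q_pl A n (fst p) (snd p) x = 0 \<and> R_pl A n (fst p) (snd p) x = 0)"

definition mple :: "mat_seq \<Rightarrow> nat \<Rightarrow> (nat \<Rightarrow> real) \<Rightarrow> real \<times> real" where
  "mple A n x = (THE p. Q_pl A n (fst p) (snd p) x = 0 \<and> R_pl A n (fst p) (snd p) x = 0)"

definition admissible :: "mat_seq \<Rightarrow> bool" where
  "admissible A \<longleftrightarrow> (\<forall>n i j. i < n \<and> j < n \<longrightarrow>
      A n i j = A n j i \<and> A n i j \<ge> 0 \<and> A n i i = 0)"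

definition cond_C1 :: "mat_seq \<Rightarrow> bool" where
  "cond_C1 A \<longleftrightarrow> (\<exists>\<gamma>. \<forall>n i. i < n \<longrightarrow> (\<Sum>j<n. A n i j) \<le> \<gamma>)"

definition cond_C2 :: "mat_seq \<Rightarrow> bool" where
  "cond_C2 A \<longleftrightarrow> liminf (\<lambda>n. ereal ((\<Sum>i<n. \<Sum>j<n. A n i j) / real n)) > 0"

text \<open>Stochastic order notions for a sequence of statistics U_n of X ~ P_n,
where P n E is the probability of event E at sample size n.\<close>
definition bigO_p :: "(nat \<Rightarrow> ((nat \<Rightarrow> real) \<Rightarrow> bool) \<Rightarrow> real) \<Rightarrow>
    (nat \<Rightarrow> (nat \<Rightarrow> real) \<Rightarrow> real) \<Rightarrow> bool" where
  "bigO_p P U \<longleftrightarrow> (\<forall>\<epsilon>>0. \<exists>M. \<forall>\<^sub>F n in sequentially. P n (\<lambda>x. \<bar>U n x\<bar> > M) \<le> \<epsilon>)"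

text \<open>T_n = Theta_p(1): T_n tight and 1/T_n tight (1/0 read as +infinity).\<close>
definition Theta_p_one :: "(nat \<Rightarrow> ((nat \<Rightarrow> real) \<Rightarrow> bool) \<Rightarrow> real) \<Rightarrow>
    (nat \<Rightarrow> (nat \<Rightarrow> real) \<Rightarrow> real) \<Rightarrow> bool" where
  "Theta_p_one P U \<longleftrightarrow> bigO_p P U \<and>
     (\<forall>\<epsilon>>0. \<exists>\<delta>>0. \<forall>\<^sub>F n in sequentially. P n (\<lambda>x. \<bar>U n x\<bar> < \<delta>) \<le> \<epsilon>)"

end

theory Submission
  imports Defs
begin


lemma cfgs_finite: "finite (cfgs n)"
  apply (rule finite_subset[OF _ finite_set_of_finite_funs[of "{..<n}" "{-1,1::real}" 0]])
  apply (auto simp: cfgs_def)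
  done

lemma cfgs_ne: "(\<lambda>i. if i < n then 1 else 0) \<in> cfgs n"
  unfolding cfgs_def by auto

lemma cfgs_abs: "x \<in> cfgs n \<Longrightarrow> \<bar>x i\<bar> \<le> 1"
  unfolding cfgs_def by (cases "i < n") auto

lemma w_pos: "ising_weight A n \<beta> B x > 0"
  unfolding ising_weight_def by simp

lemma Z_pos: "ising_Z A n \<beta> B > 0"
  unfolding ising_Z_def
  by (rule sum_pos2[OF cfgs_finite cfgs_ne]) (auto simp: w_pos less_imp_le)

definition EE :: "mat_seq \<Rightarrow> nat \<Rightarrow> real \<Rightarrow> real \<Rightarrow> ((nat \<Rightarrow> real) \<Rightarrow> real) \<Rightarrow> real" where
  "EE A n \<beta> B f = (\<Sum>x\<in>cfgs n. ising_weight A n \<beta> B x * f x) / ising_Z A n \<beta> B"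

lemma prob_EE: "ising_prob A n \<beta> B E = EE A n \<beta> B (\<lambda>x. if E x then 1 else 0)"
  unfolding ising_prob_def EE_def
  by (simp add: sum.inter_filter[OF cfgs_finite] if_distrib cong: if_cong)

lemma EE_mono: "(\<And>x. x \<in> cfgs n \<Longrightarrow> f x \<le> g x) \<Longrightarrow> EE A n \<beta> B f \<le> EE A n \<beta> B g"
  unfolding EE_def using Z_pos[of A n \<beta> B]
  by (intro divide_right_mono sum_mono mult_left_mono) (auto simp: w_pos less_imp_le)

lemma EE_const: "EE A n \<beta> B (\<lambda>_. c) = c"
  unfolding EE_def using Z_pos[of A n \<beta> B]
  by (simp add: sum_distrib_right[symmetric] ising_Z_def)

lemma EE_add: "EE A n \<beta> B (\<lambda>x. f x + g x) = EE A n \<beta> B f + EE A n \<beta> B g"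
  unfolding EE_def by (simp add: distrib_left sum.distrib add_divide_distrib)

lemma EE_diff: "EE A n \<beta> B (\<lambda>x. f x - g x) = EE A n \<beta> B f - EE A n \<beta> B g"
  unfolding EE_def by (simp add: right_diff_distrib sum_subtractf diff_divide_distrib)

lemma prob_mono: "(\<And>x. x \<in> cfgs n \<Longrightarrow> E x \<Longrightarrow> F x) \<Longrightarrow> ising_prob A n \<beta> B E \<le> ising_prob A n \<beta> B F"
  unfolding prob_EE by (rule EE_mono) auto

lemma prob_le1: "ising_prob A n \<beta> B E \<le> 1"
  using EE_mono[of n "\<lambda>x. if E x then 1 else 0" "\<lambda>_. 1" A \<beta> B] unfolding prob_EE EE_const by simp

lemma prob_compl: "ising_prob A n \<beta> B (\<lambda>x. \<not> E x) = 1 - ising_prob A n \<beta> B E"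
proof -
  have "ising_prob A n \<beta> B (\<lambda>x. \<not> E x) = EE A n \<beta> B (\<lambda>x. 1 - (if E x then 1 else 0))"
    unfolding prob_EE by (rule arg_cong[where f="EE A n \<beta> B"]) auto
  then show ?thesis unfolding EE_diff EE_const prob_EE by simp
qed

lemma prob_union: "ising_prob A n \<beta> B (\<lambda>x. E x \<or> F x) \<le> ising_prob A n \<beta> B E + ising_prob A n \<beta> B F"
  unfolding prob_EE EE_add[symmetric] by (rule EE_mono) auto

lemma chebyshev:
  assumes "t > 0"
  shows "ising_prob A n \<beta> B (\<lambda>x. \<bar>f x\<bar> > t) \<le> EE A n \<beta> B (\<lambda>x. (f x)\<^sup>2) / t\<^sup>2"
proof -
  have "ising_prob A n \<beta> B (\<lambda>x. \<bar>f x\<bar> > t) \<le> EE A n \<beta> B (\<lambda>x. (f x)\<^sup>2 / t\<^sup>2)"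
    unfolding prob_EE
  proof (rule EE_mono)
    fix x
    show "(if \<bar>f x\<bar> > t then 1 else 0) \<le> (f x)\<^sup>2 / t\<^sup>2"
    proof (cases "\<bar>f x\<bar> > t")
      case True
      then have "t\<^sup>2 \<le> (f x)\<^sup>2" using assms
        by (metis abs_le_square_iff abs_of_pos less_imp_le)
      then show ?thesis using True assms by simp
    qed simp
  qed
  also have "\<dots> = EE A n \<beta> B (\<lambda>x. (f x)\<^sup>2) / t\<^sup>2"
    unfolding EE_def by (simp add: sum_divide_distrib[symmetric])
  finally show ?thesis .
qed



definition flip :: "nat \<Rightarrow> (nat \<Rightarrow> real) \<Rightarrow> (nat \<Rightarrow> real)" where
  "flip i x = x(i := - x i)"

lemma flip_flip[simp]: "flip i (flip i x) = x"
  unfolding flip_def by auto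

lemma flip_cfgs: "i < n \<Longrightarrow> x \<in> cfgs n \<Longrightarrow> flip i x \<in> cfgs n"
  unfolding flip_def cfgs_def by auto

lemma sum_flip:
  assumes "i < n"
  shows "(\<Sum>x\<in>cfgs n. f (flip i x)) = (\<Sum>x\<in>cfgs n. f x)"
  by (rule sum.reindex_bij_witness[where i="flip i" and j="flip i"]) (auto simp: flip_cfgs assms)

lemma m_flip:
  assumes "admissible A" "i < n"
  shows "m_loc A n (flip i x) i = m_loc A n x i"
  unfolding m_loc_def flip_def
  by (rule sum.cong) (use assms in \<open>auto simp: admissible_def\<close>)

lemma quad_flip:
  assumes "admissible A" "i < n"
  shows "(\<Sum>k<n. \<Sum>l<n. flip i x k * A n k l * flip i x l)
       = (\<Sum>k<n. \<Sum>l<n. x k * A n k l * x l) - 4 * x i * m_loc A n x i"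
proof -
  define e where "e k = (if k = i then - 2 * x i else 0)" for k
  have fx: "flip i x k = x k + e k" for k unfolding flip_def e_def by auto
  have "(\<Sum>k<n. \<Sum>l<n. flip i x k * A n k l * flip i x l)
     = (\<Sum>k<n. \<Sum>l<n. x k * A n k l * x l) + (\<Sum>k<n. \<Sum>l<n. x k * A n k l * e l)
       + (\<Sum>k<n. \<Sum>l<n. e k * A n k l * x l) + (\<Sum>k<n. \<Sum>l<n. e k * A n k l * e l)"
    unfolding fx by (simp add: algebra_simps sum.distrib)
  also have "(\<Sum>k<n. \<Sum>l<n. x k * A n k l * e l) = (\<Sum>k<n. x k * A n k i * (- 2 * x i))"
    unfolding e_def using assms(2) by (simp add: if_distrib cong: if_cong)
  also have "\<dots> = - 2 * x i * m_loc A n x i"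
    unfolding m_loc_def sum_distrib_left
    by (rule sum.cong) (use assms in \<open>auto simp: admissible_def\<close>)
  also have "(\<Sum>k<n. \<Sum>l<n. e k * A n k l * x l) = (\<Sum>k<n. e k * m_loc A n x k)"
    unfolding m_loc_def by (simp add: sum_distrib_left mult.assoc)
  also have "\<dots> = (\<Sum>k<n. if k = i then - 2 * x i * m_loc A n x i else 0)"
    by (rule sum.cong) (auto simp: e_def)
  also have "\<dots> = - 2 * x i * m_loc A n x i" using assms(2) by simp
  also have "(\<Sum>k<n. \<Sum>l<n. e k * A n k l * e l) = 0"
    by (intro sum.neutral ballI) (use assms in \<open>auto simp: e_def admissible_def\<close>)
  finally show ?thesis by simp
qed

lemma w_flip:
  assumes "admissible A" "i < n"
  shows "ising_weight A n \<beta> B (flip i x)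
       = ising_weight A n \<beta> B x * exp (- 2 * x i * (\<beta> * m_loc A n x i + B))"
proof -
  have s: "(\<Sum>k<n. flip i x k) = (\<Sum>k<n. x k) - 2 * x i"
  proof -
    have "(\<Sum>k<n. flip i x k) = (\<Sum>k<n. x k + (if k = i then - 2 * x i else 0))"
      unfolding flip_def by (rule sum.cong) auto
    then show ?thesis using assms(2) by (simp add: sum.distrib)
  qed
  show ?thesis
    unfolding ising_weight_def quad_flip[OF assms] s exp_add[symmetric]
    by (rule arg_cong[where f=exp]) (simp add: algebra_simps)
qed

lemma tanh_id: "1 - tanh (a::real) = exp (- 2 * a) * (1 + tanh a)"
proof -
  define e where "e = exp (- 2 * a)"
  have e: "1 + e > 0" unfolding e_def by (simp add: add_pos_pos)
  have "tanh a = (1 - e) / (1 + e)" unfolding e_def tanh_real_altdef ..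
  then show ?thesis unfolding e_def[symmetric] using e
    by (simp add: field_simps)
qed

lemma zero_mean:
  assumes "admissible A" "i < n" and g: "\<And>x. x \<in> cfgs n \<Longrightarrow> g (flip i x) = g x"
  shows "(\<Sum>x\<in>cfgs n. ising_weight A n \<beta> B x * (g x * (x i - tanh (\<beta> * m_loc A n x i + B)))) = 0"
    (is "sum ?f _ = 0")
proof -
  have pw: "?f x + ?f (flip i x) = 0" if x: "x \<in> cfgs n" for x
  proof -
    define a where "a = \<beta> * m_loc A n x i + B"
    have fi: "flip i x i = - x i" unfolding flip_def by simp
    have xi: "x i = 1 \<or> x i = -1" using x assms(2) unfolding cfgs_def by auto
    have t: "1 - tanh a = exp (- 2 * a) * (1 + tanh a)" by (rule tanh_id)
    have t2: "exp (2 * a) * (1 - tanh a) = 1 + tanh a"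
      unfolding t by (simp add: mult.assoc[symmetric] exp_add[symmetric])
    have "?f x + ?f (flip i x) = ising_weight A n \<beta> B x * g x *
       ((x i - tanh a) + exp (- 2 * x i * a) * (- x i - tanh a))"
      unfolding w_flip[OF assms(1,2)] g[OF x] m_flip[OF assms(1,2)] fi a_def[symmetric]
      by (simp add: algebra_simps)
    also have "(x i - tanh a) + exp (- 2 * x i * a) * (- x i - tanh a) = 0"
      using xi t t2 by (auto simp: algebra_simps)
    finally show ?thesis by simp
  qed
  have "2 * sum ?f (cfgs n) = sum ?f (cfgs n) + sum (\<lambda>x. ?f (flip i x)) (cfgs n)"
    using sum_flip[OF assms(2), of ?f] by simp
  also have "\<dots> = 0" unfolding sum.distrib[symmetric] by (rule sum.neutral) (use pw in auto)
  finally show ?thesis by simp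
qed



lemma tanh_lip: "\<bar>tanh u - tanh v\<bar> \<le> \<bar>u - (v::real)\<bar>"
proof -
  have main: "\<bar>tanh v - tanh u\<bar> \<le> v - u" if uv: "u < v" for u v :: real
  proof -
    have cz: "cosh z \<noteq> 0" for z :: real using cosh_real_pos[of z] by linarith
    have "DERIV tanh z :> 1 - tanh z ^ 2" for z :: real
      using has_field_derivative_tanh[where g="\<lambda>x. x" and x=z and Db=1 and s=UNIV, OF cz DERIV_ident]
      by simp
    then obtain z where "tanh v - tanh u = (v - u) * (1 - tanh z ^ 2)"
      using MVT2[OF uv, of tanh "\<lambda>z. 1 - tanh z ^ 2"] by blast
    moreover have "0 \<le> 1 - tanh z ^ 2" "1 - tanh z ^ 2 \<le> 1"
      using tanh_real_bounds[of z] by (auto simp: abs_square_le_1)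
    ultimately show ?thesis using uv
      by (simp add: abs_mult mult_le_cancel_left1)
  qed
  consider "u < v" | "u = v" | "v < u" by linarith
  then show ?thesis
  proof cases
    case 1 then show ?thesis using main[of u v] by (simp add: abs_minus_commute)
  next
    case 3 then show ?thesis using main[of v u] by simp
  qed simp
qed

lemma abs_x_tanh: "\<bar>xj\<bar> \<le> 1 \<Longrightarrow> \<bar>xj - tanh (t::real)\<bar> \<le> 2"
  using tanh_real_bounds[of t] by auto

lemma diff_bound:
  fixes a b \<beta> B mx my xj d \<gamma> :: real
  assumes "\<bar>mx - my\<bar> \<le> d" "\<bar>my\<bar> \<le> \<gamma>" "\<bar>xj\<bar> \<le> 1" "\<beta> \<ge> 0"
  shows "\<bar>(a*mx+b)*(xj - tanh(\<beta>*mx+B)) - (a*my+b)*(xj - tanh(\<beta>*my+B))\<bar>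
          \<le> (2*\<bar>a\<bar> + (\<bar>a\<bar>*\<gamma>+\<bar>b\<bar>)*\<beta>) * d"
proof -
  have eq: "(a*mx+b)*(xj - tanh(\<beta>*mx+B)) - (a*my+b)*(xj - tanh(\<beta>*my+B))
     = a*(mx-my)*(xj - tanh(\<beta>*mx+B)) + (a*my+b)*(tanh(\<beta>*my+B) - tanh(\<beta>*mx+B))"
    by (simp add: algebra_simps)
  have d0: "d \<ge> 0" using assms(1) by linarith
  have 1: "\<bar>a*(mx-my)*(xj - tanh(\<beta>*mx+B))\<bar> \<le> \<bar>a\<bar> * d * 2"
    unfolding abs_mult
    by (intro mult_mono abs_x_tanh assms mult_left_mono) (auto simp: d0)
  have K: "\<bar>a*my+b\<bar> \<le> \<bar>a\<bar>*\<gamma>+\<bar>b\<bar>"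
    using abs_triangle_ineq[of "a*my" b] mult_left_mono[OF assms(2), of "\<bar>a\<bar>"]
    by (simp add: abs_mult)
  have t: "\<bar>tanh(\<beta>*my+B) - tanh(\<beta>*mx+B)\<bar> \<le> \<beta> * d"
  proof -
    have "\<bar>tanh(\<beta>*my+B) - tanh(\<beta>*mx+B)\<bar> \<le> \<bar>(\<beta>*my+B) - (\<beta>*mx+B)\<bar>" by (rule tanh_lip)
    also have "\<dots> = \<bar>\<beta> * (mx - my)\<bar>" by (simp add: algebra_simps abs_minus_commute)
    also have "\<dots> = \<beta> * \<bar>mx - my\<bar>" using assms(4) by (simp add: abs_mult)
    also have "\<dots> \<le> \<beta> * d" using assms(1,4) by (simp add: mult_left_mono)
    finally show ?thesis .
  qed
  have 2: "\<bar>(a*my+b)*(tanh(\<beta>*my+B) - tanh(\<beta>*mx+B))\<bar> \<le> (\<bar>a\<bar>*\<gamma>+\<bar>b\<bar>) * (\<beta> * d)"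
    unfolding abs_mult by (intro mult_mono K t) (use order_trans[OF abs_ge_zero K] in simp_all)
  show ?thesis unfolding eq using 1 2 abs_triangle_ineq[of "a*(mx-my)*(xj - tanh(\<beta>*mx+B))"]
    by (simp add: algebra_simps)
qed

lemma m_bound:
  assumes "admissible A" "\<forall>i<n. (\<Sum>j<n. A n i j) \<le> \<gamma>" "i < n" "\<And>k. k < n \<Longrightarrow> \<bar>y k\<bar> \<le> 1"
  shows "\<bar>m_loc A n y i\<bar> \<le> \<gamma>"
proof -
  have "\<bar>m_loc A n y i\<bar> \<le> (\<Sum>j<n. \<bar>A n i j * y j\<bar>)" unfolding m_loc_def by (rule sum_abs)
  also have "\<dots> \<le> (\<Sum>j<n. A n i j)"
  proof (rule sum_mono)
    fix j assume "j \<in> {..<n}"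
    then have "A n i j \<ge> 0" "\<bar>y j\<bar> \<le> 1" using assms unfolding admissible_def by auto
    then show "\<bar>A n i j * y j\<bar> \<le> A n i j" by (simp add: abs_mult mult_left_le)
  qed
  also have "\<dots> \<le> \<gamma>" using assms by auto
  finally show ?thesis .
qed

lemma m_upd0:
  assumes "i < n"
  shows "m_loc A n (x(i := 0)) j = m_loc A n x j - A n j i * x i"
proof -
  have "m_loc A n (x(i := 0)) j = (\<Sum>l<n. A n j l * x l - (if l = i then A n j i * x i else 0))"
    unfolding m_loc_def by (rule sum.cong) auto
  then show ?thesis using assms unfolding m_loc_def by (simp add: sum_subtractf)
qed



definition hh :: "real \<Rightarrow> real \<Rightarrow> mat_seq \<Rightarrow> nat \<Rightarrow> real \<Rightarrow> real \<Rightarrow> nat \<Rightarrow> (nat\<Rightarrow>real) \<Rightarrow> real" where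
  "hh a b A n \<beta> B i x = (a * m_loc A n x i + b) * (x i - tanh (\<beta> * m_loc A n x i + B))"

lemma Q_hh: "Q_pl A n \<beta> B x = (\<Sum>i<n. hh 1 0 A n \<beta> B i x)"
  unfolding Q_pl_def hh_def by simp

lemma R_hh: "R_pl A n \<beta> B x = (\<Sum>i<n. hh 0 1 A n \<beta> B i x)"
  unfolding R_pl_def hh_def by simp

lemma EE_sum: "EE A n \<beta> B (\<lambda>x. \<Sum>i\<in>I. f i x) = (\<Sum>i\<in>I. EE A n \<beta> B (f i))"
  unfolding EE_def sum_divide_distrib[symmetric] sum_distrib_left
  by (subst sum.swap) simp

lemma EE_abs: "\<bar>EE A n \<beta> B f\<bar> \<le> EE A n \<beta> B (\<lambda>x. \<bar>f x\<bar>)"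
proof -
  have Z: "ising_Z A n \<beta> B > 0" by (rule Z_pos)
  have "\<bar>\<Sum>x\<in>cfgs n. ising_weight A n \<beta> B x * f x\<bar> \<le> (\<Sum>x\<in>cfgs n. \<bar>ising_weight A n \<beta> B x * f x\<bar>)"
    by (rule sum_abs)
  also have "\<dots> = (\<Sum>x\<in>cfgs n. ising_weight A n \<beta> B x * \<bar>f x\<bar>)"
    by (rule sum.cong) (auto simp: abs_mult w_pos less_imp_le)
  finally show ?thesis unfolding EE_def using Z by (simp add: divide_right_mono)
qed

lemma EE_zero_mean:
  assumes "admissible A" "i < n" "\<And>x. x \<in> cfgs n \<Longrightarrow> g (flip i x) = g x"
  shows "EE A n \<beta> B (\<lambda>x. g x * (x i - tanh (\<beta> * m_loc A n x i + B))) = 0"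
proof -
  have "(\<Sum>x\<in>cfgs n. ising_weight A n \<beta> B x * (g x * (x i - tanh (\<beta> * m_loc A n x i + B)))) = 0"
    by (rule zero_mean[OF assms(1,2)]) (rule assms(3))
  then show ?thesis unfolding EE_def by simp
qed

lemma flip_upd0: "(flip i x)(i := 0) = x(i := 0)"
  unfolding flip_def by simp

context
  fixes A :: mat_seq and n :: nat and \<gamma> \<beta> B a b :: real
  assumes adm: "admissible A" and C1: "\<forall>i<n. (\<Sum>j<n. A n i j) \<le> \<gamma>"
    and g0: "\<gamma> \<ge> 0" and b0: "\<beta> \<ge> 0"
begin

definition "KK = \<bar>a\<bar> * \<gamma> + \<bar>b\<bar>"
definition "DD i j = (2*\<bar>a\<bar> + KK*\<beta>) * A n j i + (if i = j then KK else 0)"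

lemma KK_nn: "KK \<ge> 0" unfolding KK_def using g0 by simp

lemma c_bound:
  assumes "i < n" "\<And>k. k < n \<Longrightarrow> \<bar>y k\<bar> \<le> 1"
  shows "\<bar>a * m_loc A n y i + b\<bar> \<le> KK"
proof -
  have "\<bar>m_loc A n y i\<bar> \<le> \<gamma>" by (rule m_bound[OF adm C1]) (use assms in auto)
  then have "\<bar>a\<bar> * \<bar>m_loc A n y i\<bar> \<le> \<bar>a\<bar> * \<gamma>" by (simp add: mult_left_mono)
  then show ?thesis using abs_triangle_ineq[of "a * m_loc A n y i" b]
    unfolding KK_def by (simp add: abs_mult)
qed

lemma hh_bound:
  assumes "i < n" "x \<in> cfgs n"
  shows "\<bar>hh a b A n \<beta> B i x\<bar> \<le> 2 * KK"
proof -
  have "\<bar>hh a b A n \<beta> B i x\<bar> \<le> KK * 2"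
    unfolding hh_def abs_mult
    by (intro mult_mono c_bound abs_x_tanh assms cfgs_abs[OF assms(2)]) (auto simp: KK_nn)
  then show ?thesis by simp
qed

lemma hh_diff:
  assumes "i < n" "j < n" "x \<in> cfgs n"
  shows "\<bar>hh a b A n \<beta> B j x - hh a b A n \<beta> B j (x(i := 0))\<bar> \<le> DD i j"
proof (cases "i = j")
  case True
  have Aii: "A n i i = 0" using adm assms unfolding admissible_def by auto
  have m: "m_loc A n (x(i := 0)) i = m_loc A n x i" using m_upd0[OF assms(1)] Aii by simp
  have "hh a b A n \<beta> B j x - hh a b A n \<beta> B j (x(i := 0)) = (a * m_loc A n x i + b) * x i"
    unfolding hh_def True[symmetric] m by (simp add: algebra_simps)
  also have "\<bar>\<dots>\<bar> \<le> KK * 1"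
    unfolding abs_mult by (intro mult_mono c_bound cfgs_abs[OF assms(3)] assms) (auto simp: KK_nn)
  finally show ?thesis unfolding DD_def using True Aii by simp
next
  case False
  have Aji: "A n j i \<ge> 0" using adm assms unfolding admissible_def by auto
  have xj: "(x(i := 0)) j = x j" using False by simp
  have "\<bar>m_loc A n x j - m_loc A n (x(i := 0)) j\<bar> = \<bar>A n j i * x i\<bar>"
    unfolding m_upd0[OF assms(1)] by simp
  also have "\<dots> \<le> A n j i" using Aji cfgs_abs[OF assms(3), of i] by (simp add: abs_mult mult_left_le)
  finally have d: "\<bar>m_loc A n x j - m_loc A n (x(i := 0)) j\<bar> \<le> A n j i" .
  have my: "\<bar>m_loc A n (x(i := 0)) j\<bar> \<le> \<gamma>"
    by (rule m_bound[OF adm C1 assms(2)]) (use cfgs_abs[OF assms(3)] in auto)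
  have "\<bar>hh a b A n \<beta> B j x - hh a b A n \<beta> B j (x(i := 0))\<bar> \<le> (2*\<bar>a\<bar> + KK*\<beta>) * A n j i"
    unfolding hh_def xj KK_def
    by (rule diff_bound[OF d my cfgs_abs[OF assms(3)] b0])
  then show ?thesis unfolding DD_def using False by simp
qed

lemma cross_bound:
  assumes "i < n" "j < n"
  shows "EE A n \<beta> B (\<lambda>x. hh a b A n \<beta> B i x * hh a b A n \<beta> B j x) \<le> 2 * KK * DD i j"
proof -
  define g where "g x = (a * m_loc A n x i + b) * hh a b A n \<beta> B j (x(i := 0))" for x
  have ginv: "g (flip i x) = g x" if "x \<in> cfgs n" for x
    unfolding g_def m_flip[OF adm assms(1)] flip_upd0 ..
  have split: "hh a b A n \<beta> B i x * hh a b A n \<beta> B j x =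
     hh a b A n \<beta> B i x * (hh a b A n \<beta> B j x - hh a b A n \<beta> B j (x(i := 0)))
     + g x * (x i - tanh (\<beta> * m_loc A n x i + B))" for x
    unfolding g_def hh_def by (simp add: algebra_simps)
  have "EE A n \<beta> B (\<lambda>x. hh a b A n \<beta> B i x * hh a b A n \<beta> B j x) =
     EE A n \<beta> B (\<lambda>x. hh a b A n \<beta> B i x * (hh a b A n \<beta> B j x - hh a b A n \<beta> B j (x(i := 0))))"
  proof -
    have z: "EE A n \<beta> B (\<lambda>x. g x * (x i - tanh (\<beta> * m_loc A n x i + B))) = 0"
      by (rule EE_zero_mean[OF adm assms(1)]) (rule ginv)
    show ?thesis unfolding split EE_add z by simp
  qed
  also have "\<dots> \<le> EE A n \<beta> B (\<lambda>x. \<bar>hh a b A n \<beta> B i x * (hh a b A n \<beta> B j x - hh a b A n \<beta> B j (x(i := 0)))\<bar>)"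
    using EE_abs by (rule abs_le_D1)
  also have "\<dots> \<le> EE A n \<beta> B (\<lambda>x. 2 * KK * DD i j)"
  proof (rule EE_mono)
    fix x assume x: "x \<in> cfgs n"
    show "\<bar>hh a b A n \<beta> B i x * (hh a b A n \<beta> B j x - hh a b A n \<beta> B j (x(i := 0)))\<bar> \<le> 2 * KK * DD i j"
      unfolding abs_mult
      by (intro mult_mono hh_bound hh_diff assms x) (auto simp: KK_nn)
  qed
  finally show ?thesis unfolding EE_const .
qed

lemma second_moment:
  "EE A n \<beta> B (\<lambda>x. (\<Sum>i<n. hh a b A n \<beta> B i x)\<^sup>2) \<le> 2 * KK * ((2*\<bar>a\<bar> + KK*\<beta>) * \<gamma> + KK) * n"
proof -
  have "EE A n \<beta> B (\<lambda>x. (\<Sum>i<n. hh a b A n \<beta> B i x)\<^sup>2)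
      = (\<Sum>i<n. \<Sum>j<n. EE A n \<beta> B (\<lambda>x. hh a b A n \<beta> B i x * hh a b A n \<beta> B j x))"
    unfolding power2_eq_square sum_product EE_sum ..
  also have "\<dots> \<le> (\<Sum>i<n. \<Sum>j<n. 2 * KK * DD i j)"
    by (intro sum_mono cross_bound) auto
  also have "\<dots> = 2 * KK * ((2*\<bar>a\<bar> + KK*\<beta>) * (\<Sum>j<n. \<Sum>i<n. A n j i) + n * KK)"
  proof -
    have "(\<Sum>i<n. \<Sum>j<n. DD i j) = (2*\<bar>a\<bar> + KK*\<beta>) * (\<Sum>i<n. \<Sum>j<n. A n j i) + (\<Sum>i<n. KK)"
      unfolding DD_def by (simp add: sum.distrib sum_distrib_left)
    also have "(\<Sum>i<n. \<Sum>j<n. A n j i) = (\<Sum>j<n. \<Sum>i<n. A n j i)" by (rule sum.swap)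
    finally show ?thesis by (simp add: sum_distrib_left[symmetric])
  qed
  also have "\<dots> \<le> 2 * KK * ((2*\<bar>a\<bar> + KK*\<beta>) * (n * \<gamma>) + n * KK)"
  proof -
    have "(\<Sum>j<n. \<Sum>i<n. A n j i) \<le> (\<Sum>j<n. \<gamma>)" using C1 by (intro sum_mono) auto
    then show ?thesis using KK_nn b0
      by (intro mult_left_mono add_right_mono) auto
  qed
  finally show ?thesis by (simp add: algebra_simps)
qed

end



lemma sech_bound: "1 - tanh (y::real) ^ 2 \<ge> exp (- 2 * \<bar>y\<bar>)"
proof -
  have c: "cosh y > 0" by simp
  have c2: "cosh y ^ 2 \<noteq> 0" using c by simp
  have "1 - tanh y ^ 2 = (cosh y ^ 2 - sinh y ^ 2) / cosh y ^ 2"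
    unfolding tanh_def power_divide using c2 by (simp add: diff_divide_distrib)
  also have "\<dots> = 1 / cosh y ^ 2" using cosh_square_eq[of y] by simp
  finally have "1 - tanh y ^ 2 = 1 / cosh y ^ 2" .
  moreover have "cosh y \<le> exp \<bar>y\<bar>"
    unfolding cosh_field_def by (cases "y \<ge> 0") auto
  then have "cosh y ^ 2 \<le> exp \<bar>y\<bar> ^ 2" using c by (intro power_mono) auto
  then have "1 / exp \<bar>y\<bar> ^ 2 \<le> 1 / cosh y ^ 2" using c by (intro divide_left_mono) auto
  moreover have "1 / exp \<bar>y\<bar> ^ 2 = exp (- 2 * \<bar>y\<bar>)"
    by (simp add: power2_eq_square exp_add[symmetric] exp_minus field_simps)
  ultimately show ?thesis by simp
qed

lemma sech_pos: "1 - tanh (y::real) ^ 2 > 0"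
  using sech_bound[of y] by (smt (verit) exp_gt_zero)

definition LL :: "mat_seq \<Rightarrow> nat \<Rightarrow> (nat \<Rightarrow> real) \<Rightarrow> real \<Rightarrow> real \<Rightarrow> real" where
  "LL A n x \<beta> B = (\<Sum>i<n. ln (cosh (\<beta> * m_loc A n x i + B)) - x i * (\<beta> * m_loc A n x i + B))"

definition phi :: "mat_seq \<Rightarrow> nat \<Rightarrow> (nat \<Rightarrow> real) \<Rightarrow> real \<Rightarrow> real \<Rightarrow> real \<Rightarrow> real \<Rightarrow> real \<Rightarrow> real" where
  "phi A n x b c d1 d2 t = (\<Sum>i<n. (d1 * m_loc A n x i + d2) *
       (tanh ((b + t*d1) * m_loc A n x i + (c + t*d2)) - x i))"

definition psi :: "mat_seq \<Rightarrow> nat \<Rightarrow> (nat \<Rightarrow> real) \<Rightarrow> real \<Rightarrow> real \<Rightarrow> real \<Rightarrow> real \<Rightarrow> real \<Rightarrow> real" where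
  "psi A n x b c d1 d2 t = (\<Sum>i<n. (d1 * m_loc A n x i + d2)^2 *
       (1 - tanh ((b + t*d1) * m_loc A n x i + (c + t*d2)) ^ 2))"

lemma phi_QR: "phi A n x b c d1 d2 t =
   - (d1 * Q_pl A n (b + t*d1) (c + t*d2) x + d2 * R_pl A n (b + t*d1) (c + t*d2) x)"
  unfolding phi_def Q_pl_def R_pl_def sum_distrib_left sum_negf[symmetric] sum.distrib[symmetric]
  by (rule sum.cong) (auto simp: algebra_simps)

lemma cosh_nz: "cosh (y::real) \<noteq> 0"
  using cosh_real_pos[of y] by linarith

lemma LL_deriv: "DERIV (\<lambda>t. LL A n x (b + t*d1) (c + t*d2)) t :> phi A n x b c d1 d2 t"
  unfolding LL_def phi_def
  by (rule DERIV_sum)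
     (auto intro!: derivative_eq_intros simp: cosh_nz tanh_def field_simps)

lemma phi_deriv: "DERIV (phi A n x b c d1 d2) t :> psi A n x b c d1 d2 t"
  unfolding phi_def psi_def
  by (rule DERIV_sum)
     (auto intro!: derivative_eq_intros simp: cosh_nz power2_eq_square field_simps)



lemma quad_lower:
  fixes d1 d2 mb T \<delta> \<gamma> cc :: real
  assumes "cc = d1 * mb + d2" "mb^2 \<le> \<gamma>^2" "0 < \<delta>" "\<delta> \<le> T" "\<gamma> \<ge> 0"
  shows "\<delta> / (1 + 2*\<gamma>^2 + 2*\<delta>) * (d1^2 + d2^2) \<le> d1^2 * T + cc^2"
proof -
  have D: "1 + 2*\<gamma>^2 + 2*\<delta> > 0" using assms by (simp add: add_pos_nonneg)
  have d2: "d2 = cc - d1 * mb" using assms(1) by simp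
  have "d2^2 \<le> 2*cc^2 + 2*(d1^2 * mb^2)"
    unfolding d2 using sum_squares_ge_zero[of "cc + d1*mb" 0]
    by (simp add: power2_eq_square algebra_simps)
  also have "d1^2 * mb^2 \<le> d1^2 * \<gamma>^2" using assms(2) by (simp add: mult_left_mono)
  finally have d2b: "d2^2 \<le> 2*cc^2 + 2*(d1^2*\<gamma>^2)" by simp
  have eq: "(1 + 2*\<gamma>^2 + 2*\<delta>) * (d1^2 * \<delta> + cc^2) - \<delta> * (d1^2 + d2^2)
     = 2*\<delta>^2*d1^2 + cc^2*(1 + 2*\<gamma>^2) + \<delta> * ((2*cc^2 + 2*(d1^2*\<gamma>^2)) - d2^2)"
    by (simp add: algebra_simps power2_eq_square)
  have "0 \<le> 2*\<delta>^2*d1^2 + cc^2*(1 + 2*\<gamma>^2) + \<delta> * ((2*cc^2 + 2*(d1^2*\<gamma>^2)) - d2^2)"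
    using assms(3) d2b by (intro add_nonneg_nonneg mult_nonneg_nonneg) auto
  then have "\<delta> * (d1^2 + d2^2) \<le> (1 + 2*\<gamma>^2 + 2*\<delta>) * (d1^2 * \<delta> + cc^2)"
    using eq by linarith
  then have "\<delta> / (1 + 2*\<gamma>^2 + 2*\<delta>) * (d1^2 + d2^2) \<le> d1^2 * \<delta> + cc^2"
    using D by (simp add: field_simps)
  also have "\<dots> \<le> d1^2 * T + cc^2" using assms(4) by (simp add: mult_left_mono)
  finally show ?thesis .
qed

lemma sum_sq_decomp:
  fixes m :: "nat \<Rightarrow> real"
  assumes "n > 0"
  defines "mb \<equiv> (\<Sum>i<n. m i) / n"
  shows "(\<Sum>i<n. (d1 * m i + d2)^2) = n * (d1^2 * ((\<Sum>i<n. (m i - mb)^2) / n) + (d1*mb + d2)^2)"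
proof -
  have z: "(\<Sum>i<n. m i - mb) = 0" using assms(1) unfolding mb_def by (simp add: sum_subtractf)
  have "(\<Sum>i<n. (d1 * m i + d2)^2) =
     (\<Sum>i<n. d1^2 * (m i - mb)^2 + 2*d1*(d1*mb+d2) * (m i - mb) + (d1*mb + d2)^2)"
    by (rule sum.cong) (auto simp: power2_eq_square algebra_simps)
  also have "\<dots> = d1^2 * (\<Sum>i<n. (m i - mb)^2) + 2*d1*(d1*mb+d2) * (\<Sum>i<n. m i - mb) + n * (d1*mb + d2)^2"
    by (simp add: sum.distrib sum_distrib_left)
  finally show ?thesis using z assms(1) by (simp add: field_simps)
qed

lemma psi_sum_lower:
  assumes "admissible A" "\<forall>i<n. (\<Sum>j<n. A n i j) \<le> \<gamma>" "\<gamma> \<ge> 0" "n > 0"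
    "\<And>k. k < n \<Longrightarrow> \<bar>x k\<bar> \<le> 1" "0 < \<delta>" "\<delta> \<le> T_stat A n x"
  shows "n * (\<delta> / (1 + 2*\<gamma>^2 + 2*\<delta>)) * (d1^2 + d2^2) \<le> (\<Sum>i<n. (d1 * m_loc A n x i + d2)^2)"
proof -
  let ?mb = "m_bar A n x"
  have mb: "?mb = (\<Sum>i<n. m_loc A n x i) / n" unfolding m_bar_def ..
  have mbd: "\<bar>m_loc A n x i\<bar> \<le> \<gamma>" if "i < n" for i
    by (rule m_bound[OF assms(1,2) that]) (use assms(5) in auto)
  have "\<bar>\<Sum>i<n. m_loc A n x i\<bar> \<le> (\<Sum>i<n. \<gamma>)"
  proof -
    have "(\<Sum>i<n. \<bar>m_loc A n x i\<bar>) \<le> (\<Sum>i<n. \<gamma>)" by (rule sum_mono) (use mbd in auto)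
    then show ?thesis using sum_abs[of "m_loc A n x" "{..<n}"] by linarith
  qed
  then have "\<bar>?mb\<bar> \<le> \<gamma>" unfolding mb using assms(4) by (simp add: divide_le_eq abs_divide mult.commute)
  then have mb2: "?mb^2 \<le> \<gamma>^2" using power_mono[of "\<bar>?mb\<bar>" \<gamma> 2] by simp
  have T: "T_stat A n x = (\<Sum>i<n. (m_loc A n x i - ?mb)^2) / n" unfolding T_stat_def ..
  have "n * (\<delta> / (1 + 2*\<gamma>^2 + 2*\<delta>)) * (d1^2 + d2^2) \<le> n * (d1^2 * T_stat A n x + (d1 * ?mb + d2)^2)"
    unfolding mult.assoc by (intro mult_left_mono quad_lower[OF refl mb2 assms(6,7,3)]) auto
  also have "\<dots> = (\<Sum>i<n. (d1 * m_loc A n x i + d2)^2)"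
    unfolding T mb by (rule sum_sq_decomp[OF assms(4), symmetric])
  finally show ?thesis .
qed



lemma cs2: "\<bar>d1 * q + d2 * r\<bar> \<le> sqrt (d1^2 + d2^2) * sqrt (q^2 + (r::real)^2)"
proof -
  have "(d1 * q + d2 * r)^2 \<le> (d1^2 + d2^2) * (q^2 + r^2)"
  proof -
    have "(d1^2 + d2^2) * (q^2 + r^2) - (d1 * q + d2 * r)^2 = (d1 * r - d2 * q)^2"
      by (simp add: power2_eq_square algebra_simps)
    then show ?thesis by (smt (verit) zero_le_power2)
  qed
  then have "sqrt ((d1 * q + d2 * r)^2) \<le> sqrt ((d1^2 + d2^2) * (q^2 + r^2))"
    by (rule real_sqrt_le_mono)
  then show ?thesis by (simp add: real_sqrt_mult)
qed

lemma convex_lower: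
  fixes g f h :: "real \<Rightarrow> real"
  assumes dg: "\<And>t. DERIV g t :> f t" and df: "\<And>t. DERIV f t :> h t"
    and hc: "\<And>t. 0 \<le> t \<Longrightarrow> t \<le> 1 \<Longrightarrow> h t \<ge> c"
  shows "g 1 \<ge> g 0 + f 0 + c / 2"
proof -
  have fl: "f t \<ge> f 0 + c * t" if "0 \<le> t" "t \<le> 1" for t
  proof (cases "t = 0")
    case False
    then have t0: "0 < t" using that by simp
    obtain z where z: "0 < z" "z < t" "f t - f 0 = (t - 0) * h z"
      using MVT2[OF t0, of f h] df by blast
    have "h z \<ge> c" using z that by (intro hc) auto
    then have "c * t \<le> t * h z" using t0 by (simp add: mult_left_mono mult.commute)
    moreover have "f t - f 0 = t * h z" using z(3) by simp
    ultimately show ?thesis by linarith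
  qed simp
  define K where "K t = g t - t * f 0 - c * t^2 / 2" for t
  have dK: "DERIV K t :> f t - f 0 - c * t" for t
    unfolding K_def by (auto intro!: derivative_eq_intros dg simp: power2_eq_square)
  obtain z where z: "0 < z" "z < 1" "K 1 - K 0 = (1 - 0) * (f z - f 0 - c * z)"
    using MVT2[of 0 1 K "\<lambda>t. f t - f 0 - c * t"] dK by auto
  have "f z - f 0 - c * z \<ge> 0" using fl[of z] z by simp
  then have "K 1 \<ge> K 0" using z by simp
  then show ?thesis unfolding K_def by simp
qed

lemma psi_pos_sum:
  assumes "(\<Sum>i<n. (d1 * m_loc A n x i + d2)^2) > 0"
  shows "psi A n x b c d1 d2 t > 0"
proof -
  obtain i where i: "i < n" "(d1 * m_loc A n x i + d2)^2 > 0"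
  proof (rule ccontr)
    assume "\<not> thesis"
    then have "\<forall>i<n. (d1 * m_loc A n x i + d2)^2 \<le> 0" using that by force
    then have "(\<Sum>i<n. (d1 * m_loc A n x i + d2)^2) \<le> 0" by (intro sum_nonpos) auto
    then show False using assms by simp
  qed
  have pos: "0 < (d1 * m_loc A n x i + d2)^2 * (1 - tanh ((b + t*d1) * m_loc A n x i + (c + t*d2)) ^ 2)"
    using i(2) sech_pos by (rule mult_pos_pos)
  have nn: "0 \<le> (d1 * m_loc A n x j + d2)^2 * (1 - tanh ((b + t*d1) * m_loc A n x j + (c + t*d2)) ^ 2)" for j
    by (rule mult_nonneg_nonneg) (simp, rule less_imp_le[OF sech_pos])
  show ?thesis unfolding psi_def
    by (rule sum_pos2[of "{..<n}" i]) (use i(1) pos nn in auto)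
qed

context
  fixes A :: mat_seq and n :: nat and \<gamma> \<delta> :: real and x :: "nat \<Rightarrow> real"
  assumes adm: "admissible A" and C1: "\<forall>i<n. (\<Sum>j<n. A n i j) \<le> \<gamma>"
    and g0: "\<gamma> \<ge> 0" and npos: "n > 0" and xb: "\<And>k. k < n \<Longrightarrow> \<bar>x k\<bar> \<le> 1"
    and d0: "0 < \<delta>" and dT: "\<delta> \<le> T_stat A n x"
begin

definition "cd = \<delta> / (1 + 2*\<gamma>^2 + 2*\<delta>)"

lemma cd_pos: "cd > 0" unfolding cd_def using d0 g0 by (simp add: add_pos_nonneg)

lemma sumsq_lower: "n * cd * (d1^2 + d2^2) \<le> (\<Sum>i<n. (d1 * m_loc A n x i + d2)^2)"
  unfolding cd_def by (rule psi_sum_lower[OF adm C1 g0 npos xb d0 dT])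

lemma unique_root:
  assumes "Q_pl A n (fst p) (snd p) x = 0 \<and> R_pl A n (fst p) (snd p) x = 0"
    and "Q_pl A n (fst q) (snd q) x = 0 \<and> R_pl A n (fst q) (snd q) x = 0"
  shows "p = q"
proof (rule ccontr)
  assume ne: "p \<noteq> q"
  define d1 where "d1 = fst q - fst p"
  define d2 where "d2 = snd q - snd p"
  have "d1 \<noteq> 0 \<or> d2 \<noteq> 0" using ne unfolding d1_def d2_def by (auto simp: prod_eq_iff)
  then have "d1^2 + d2^2 > 0" by (auto simp: add_pos_nonneg add_nonneg_pos)
  then have "n * cd * (d1^2 + d2^2) > 0" using npos cd_pos by simp
  then have S: "(\<Sum>i<n. (d1 * m_loc A n x i + d2)^2) > 0" using sumsq_lower[of d1 d2] by linarith
  let ?phi = "phi A n x (fst p) (snd p) d1 d2"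
  have p0: "?phi 0 = 0" unfolding phi_QR using assms(1) by simp
  have p1: "?phi 1 = 0" unfolding phi_QR d1_def d2_def using assms(2) by simp
  have "\<exists>z. 0 < z \<and> z < 1 \<and> ?phi 1 - ?phi 0 = (1 - 0) * psi A n x (fst p) (snd p) d1 d2 z"
    by (rule MVT2) (auto intro: phi_deriv)
  then obtain z where "?phi 1 - ?phi 0 = (1 - 0) * psi A n x (fst p) (snd p) d1 d2 z" by blast
  then have "psi A n x (fst p) (snd p) d1 d2 z = 0" using p0 p1 by simp
  then show False using psi_pos_sum[OF S, of "fst p" "snd p" z] by simp
qed

end



lemma dist_pq: "dist p q = sqrt ((fst p - fst q)^2 + (snd p - snd (q :: real \<times> real))^2)"
  by (cases p, cases q) (simp add: dist_Pair_Pair dist_real_def)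

lemma LL_cont: "continuous_on S (\<lambda>p. LL A n x (fst p) (snd p))"
  unfolding LL_def by (auto intro!: continuous_intros simp: cosh_nz)

context
  fixes A :: mat_seq and n :: nat and \<gamma> \<delta> :: real and x :: "nat \<Rightarrow> real"
  assumes adm: "admissible A" and C1: "\<forall>i<n. (\<Sum>j<n. A n i j) \<le> \<gamma>"
    and g0: "\<gamma> \<ge> 0" and npos: "n > 0" and xb: "\<And>k. k < n \<Longrightarrow> \<bar>x k\<bar> \<le> 1"
    and d0: "0 < \<delta>" and dT: "\<delta> \<le> T_stat A n x"
begin

lemma exists_root:
  fixes \<beta>0 B0 r :: real
  defines "K1 \<equiv> (\<bar>\<beta>0\<bar> + 1) * \<gamma> + \<bar>B0\<bar> + 1"
  assumes r: "0 < r" "r \<le> 1"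
    and small: "sqrt ((Q_pl A n \<beta>0 B0 x)^2 + (R_pl A n \<beta>0 B0 x)^2) < exp (- 2 * K1) * cd \<gamma> \<delta> * n * r / 2"
  shows "\<exists>p. dist p (\<beta>0, B0) < r \<and> Q_pl A n (fst p) (snd p) x = 0 \<and> R_pl A n (fst p) (snd p) x = 0"
proof -
  let ?L = "\<lambda>p. LL A n x (fst p) (snd p)"
  let ?th = "(\<beta>0, B0)"
  let ?S = "sqrt ((Q_pl A n \<beta>0 B0 x)^2 + (R_pl A n \<beta>0 B0 x)^2)"
  have cdp: "cd \<gamma> \<delta> > 0" using cd_pos[OF adm C1 g0 npos xb d0 dT] .
  have "\<exists>p\<in>cball ?th r. \<forall>y\<in>cball ?th r. ?L p \<le> ?L y"
    by (rule continuous_attains_inf[OF compact_cball _ LL_cont]) (use r in auto)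
  then obtain p where pc: "p \<in> cball ?th r" and pmin: "\<And>y. y \<in> cball ?th r \<Longrightarrow> ?L p \<le> ?L y"
    by blast
  have mb: "\<bar>m_loc A n x i\<bar> \<le> \<gamma>" if "i < n" for i
    by (rule m_bound[OF adm C1 that]) (use xb in auto)
  have dlt: "dist p ?th < r"
  proof (rule ccontr)
    assume "\<not> dist p ?th < r"
    then have dr: "dist p ?th = r" using pc by (simp add: dist_commute)
    define d1 where "d1 = fst p - \<beta>0"
    define d2 where "d2 = snd p - B0"
    have nd: "sqrt (d1^2 + d2^2) = r" using dr unfolding dist_pq d1_def d2_def by simp
    then have nd2: "d1^2 + d2^2 = r^2" by (metis add_nonneg_nonneg real_sqrt_pow2 zero_le_power2)
    have ad1: "\<bar>d1\<bar> \<le> 1"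
    proof -
      have "\<bar>d1\<bar> = sqrt (d1^2)" by simp
      also have "\<dots> \<le> sqrt (d1^2 + d2^2)" by (rule real_sqrt_le_mono) simp
      finally show ?thesis using nd r by simp
    qed
    have ad2: "\<bar>d2\<bar> \<le> 1"
    proof -
      have "\<bar>d2\<bar> = sqrt (d2^2)" by simp
      also have "\<dots> \<le> sqrt (d1^2 + d2^2)" by (rule real_sqrt_le_mono) simp
      finally show ?thesis using nd r by simp
    qed
    define c where "c = exp (- 2 * K1) * (n * cd \<gamma> \<delta> * r^2)"
    have hc: "psi A n x \<beta>0 B0 d1 d2 t \<ge> c" if t: "0 \<le> t" "t \<le> 1" for t
    proof -
      have trm: "(d1 * m_loc A n x i + d2)^2 * exp (- 2 * K1) \<le>
          (d1 * m_loc A n x i + d2)^2 * (1 - tanh ((\<beta>0 + t*d1) * m_loc A n x i + (B0 + t*d2)) ^ 2)"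
        if i: "i < n" for i
      proof (rule mult_left_mono)
        let ?u = "(\<beta>0 + t*d1) * m_loc A n x i + (B0 + t*d2)"
        have "\<bar>t*d1\<bar> \<le> 1" using t ad1 by (simp add: abs_mult mult_le_one)
        then have b1: "\<bar>\<beta>0 + t*d1\<bar> \<le> \<bar>\<beta>0\<bar> + 1" by linarith
        have "\<bar>t*d2\<bar> \<le> 1" using t ad2 by (simp add: abs_mult mult_le_one)
        then have b2: "\<bar>B0 + t*d2\<bar> \<le> \<bar>B0\<bar> + 1" by linarith
        have "\<bar>(\<beta>0 + t*d1) * m_loc A n x i\<bar> \<le> (\<bar>\<beta>0\<bar> + 1) * \<gamma>"
          unfolding abs_mult using b1 mb[OF i] by (intro mult_mono) auto
        then have "\<bar>?u\<bar> \<le> K1" using b2 unfolding K1_def by linarith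
        then have "exp (- 2 * K1) \<le> exp (- 2 * \<bar>?u\<bar>)" by simp
        also have "\<dots> \<le> 1 - tanh ?u ^ 2" by (rule sech_bound)
        finally show "exp (- 2 * K1) \<le> 1 - tanh ?u ^ 2" .
      qed simp
      have "c = exp (- 2 * K1) * (n * cd \<gamma> \<delta> * (d1^2 + d2^2))" unfolding c_def nd2 ..
      also have "\<dots> \<le> exp (- 2 * K1) * (\<Sum>i<n. (d1 * m_loc A n x i + d2)^2)"
        by (intro mult_left_mono sumsq_lower[OF adm C1 g0 npos xb d0 dT]) (auto intro: less_imp_le[OF exp_gt_zero])
      also have "\<dots> = (\<Sum>i<n. (d1 * m_loc A n x i + d2)^2 * exp (- 2 * K1))"
        by (simp add: sum_distrib_left mult.commute)
      also have "\<dots> \<le> psi A n x \<beta>0 B0 d1 d2 t"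
        unfolding psi_def by (rule sum_mono) (use trm in auto)
      finally show ?thesis .
    qed
    have cl: "LL A n x (\<beta>0 + 1*d1) (B0 + 1*d2) \<ge> LL A n x (\<beta>0 + 0*d1) (B0 + 0*d2) + phi A n x \<beta>0 B0 d1 d2 0 + c / 2"
      by (rule convex_lower[where g="\<lambda>t. LL A n x (\<beta>0 + t*d1) (B0 + t*d2)"])
         (rule LL_deriv, rule phi_deriv, rule hc)
    have ph: "phi A n x \<beta>0 B0 d1 d2 0 \<ge> - (r * ?S)"
    proof -
      have "\<bar>d1 * Q_pl A n \<beta>0 B0 x + d2 * R_pl A n \<beta>0 B0 x\<bar> \<le> r * ?S"
        using cs2[of d1 "Q_pl A n \<beta>0 B0 x" d2 "R_pl A n \<beta>0 B0 x"] nd by simp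
      then show ?thesis unfolding phi_QR by simp
    qed
    have "r * ?S < r * (exp (- 2 * K1) * cd \<gamma> \<delta> * n * r / 2)"
      using small r by simp
    also have "\<dots> = c / 2" unfolding c_def by (simp add: power2_eq_square)
    finally have "?L p > ?L ?th" using cl ph unfolding d1_def d2_def by simp
    moreover have "?L p \<le> ?L ?th" using pmin[of ?th] r by simp
    ultimately show False by simp
  qed
  define e where "e = r - dist p ?th"
  have e: "e > 0" using dlt unfolding e_def by simp
  have inball: "(fst p + y1, snd p + y2) \<in> cball ?th r" if "\<bar>y1\<bar> < e" "\<bar>y2\<bar> < e" "y1 = 0 \<or> y2 = 0" for y1 y2
  proof -
    have "dist (fst p + y1, snd p + y2) p \<le> \<bar>y1\<bar> + \<bar>y2\<bar>"
      unfolding dist_pq using that by auto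
    then have "dist (fst p + y1, snd p + y2) ?th \<le> \<bar>y1\<bar> + \<bar>y2\<bar> + dist p ?th"
      using dist_triangle[of "(fst p + y1, snd p + y2)" ?th p] by linarith
    then show ?thesis using that unfolding e_def by (auto simp: dist_commute)
  qed
  have Q0: "phi A n x (fst p) (snd p) 1 0 0 = 0"
  proof (rule DERIV_local_min[OF LL_deriv e], intro allI impI)
    fix y :: real assume "\<bar>0 - y\<bar> < e"
    then have "(fst p + y*1, snd p + y*0) \<in> cball ?th r" using inball[of y 0] e by simp
    then show "LL A n x (fst p + 0*1) (snd p + 0*0) \<le> LL A n x (fst p + y*1) (snd p + y*0)"
      using pmin by fastforce
  qed
  have R0: "phi A n x (fst p) (snd p) 0 1 0 = 0"
  proof (rule DERIV_local_min[OF LL_deriv e], intro allI impI)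
    fix y :: real assume "\<bar>0 - y\<bar> < e"
    then have "(fst p + y*0, snd p + y*1) \<in> cball ?th r" using inball[of 0 y] e by simp
    then show "LL A n x (fst p + 0*0) (snd p + 0*1) \<le> LL A n x (fst p + y*0) (snd p + y*1)"
      using pmin by fastforce
  qed
  show ?thesis using dlt Q0 R0 unfolding phi_QR by (intro exI[of _ p]) simp
qed

end



lemma T_nonneg: "T_stat A n x \<ge> 0"
  unfolding T_stat_def by (intro divide_nonneg_nonneg sum_nonneg) auto

theorem corollary1:
  fixes A :: mat_seq and \<beta>0 B0 :: real
  assumes "admissible A" and "cond_C1 A" and "cond_C2 A"
    and "\<beta>0 > 0" and "B0 \<noteq> 0"
    and "Theta_p_one (\<lambda>n. ising_prob A n \<beta>0 B0) (\<lambda>n x. T_stat A n x)"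
  shows "((\<lambda>n. ising_prob A n \<beta>0 B0 (mple_exists A n)) \<longlonglongrightarrow> 1) \<and>
         (\<forall>\<epsilon>>0. \<exists>M. \<forall>\<^sub>F n in sequentially.
           ising_prob A n \<beta>0 B0 (\<lambda>x. mple_exists A n x \<and>
              sqrt ((fst (mple A n x) - \<beta>0)\<^sup>2 + (snd (mple A n x) - B0)\<^sup>2) \<le> M / sqrt (real n))
           \<ge> 1 - \<epsilon>)"
proof -
  note adm = assms(1)
  obtain \<gamma>0 where \<gamma>0: "\<And>n i. i < n \<Longrightarrow> (\<Sum>j<n. A n i j) \<le> \<gamma>0"
    using assms(2) unfolding cond_C1_def by blast
  define \<gamma> where "\<gamma> = max \<gamma>0 0"
  have g0: "\<gamma> \<ge> 0" unfolding \<gamma>_def by simp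
  have C1: "\<forall>i<n. (\<Sum>j<n. A n i j) \<le> \<gamma>" for n
    using \<gamma>0 unfolding \<gamma>_def by (meson max.coboundedI1)
  have b0: "\<beta>0 \<ge> 0" using assms(4) by simp
  obtain C :: real where Cpos: "C > 0"
    and CQ: "\<And>n. EE A n \<beta>0 B0 (\<lambda>x. (Q_pl A n \<beta>0 B0 x)\<^sup>2) \<le> C * real n"
    and CR: "\<And>n. EE A n \<beta>0 B0 (\<lambda>x. (R_pl A n \<beta>0 B0 x)\<^sup>2) \<le> C * real n"
  proof -
    define CQ where "CQ = 2 * KK \<gamma> 1 0 * ((2*\<bar>1::real\<bar> + KK \<gamma> 1 0 * \<beta>0) * \<gamma> + KK \<gamma> 1 0)"
    define CR where "CR = 2 * KK \<gamma> 0 1 * ((2*\<bar>0::real\<bar> + KK \<gamma> 0 1 * \<beta>0) * \<gamma> + KK \<gamma> 0 1)"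
    have q: "EE A n \<beta>0 B0 (\<lambda>x. (Q_pl A n \<beta>0 B0 x)\<^sup>2) \<le> CQ * n" for n
      unfolding Q_hh CQ_def using second_moment[OF adm C1[of n] g0 b0, where a=1 and b=0 and B=B0] by simp
    have r: "EE A n \<beta>0 B0 (\<lambda>x. (R_pl A n \<beta>0 B0 x)\<^sup>2) \<le> CR * n" for n
      unfolding R_hh CR_def using second_moment[OF adm C1[of n] g0 b0, where a=0 and b=1 and B=B0] by simp
    show thesis
    proof (rule that[where C="\<bar>CQ\<bar> + \<bar>CR\<bar> + 1"])
      show "\<bar>CQ\<bar> + \<bar>CR\<bar> + 1 > 0" by simp
      show "EE A n \<beta>0 B0 (\<lambda>x. (Q_pl A n \<beta>0 B0 x)\<^sup>2) \<le> (\<bar>CQ\<bar> + \<bar>CR\<bar> + 1) * n" for n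
      proof -
        have "CQ \<le> \<bar>CQ\<bar> + \<bar>CR\<bar> + 1" using abs_ge_self[of CQ] abs_ge_zero[of CR] by linarith
        then have "CQ * real n \<le> (\<bar>CQ\<bar> + \<bar>CR\<bar> + 1) * real n" by (rule mult_right_mono) simp
        then show ?thesis using q[of n] by linarith
      qed
      show "EE A n \<beta>0 B0 (\<lambda>x. (R_pl A n \<beta>0 B0 x)\<^sup>2) \<le> (\<bar>CQ\<bar> + \<bar>CR\<bar> + 1) * n" for n
      proof -
        have "CR \<le> \<bar>CQ\<bar> + \<bar>CR\<bar> + 1" using abs_ge_self[of CR] abs_ge_zero[of CQ] by linarith
        then have "CR * real n \<le> (\<bar>CQ\<bar> + \<bar>CR\<bar> + 1) * real n" by (rule mult_right_mono) simp
        then show ?thesis using r[of n] by linarith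
      qed
    qed
  qed
  have main: "\<exists>M. \<forall>\<^sub>F n in sequentially.
           ising_prob A n \<beta>0 B0 (\<lambda>x. mple_exists A n x \<and>
              sqrt ((fst (mple A n x) - \<beta>0)\<^sup>2 + (snd (mple A n x) - B0)\<^sup>2) \<le> M / sqrt (real n))
           \<ge> 1 - \<epsilon>" if eps: "\<epsilon> > 0" for \<epsilon>
  proof -
    obtain \<delta> where dpos: "\<delta> > 0"
      and ev1: "\<forall>\<^sub>F n in sequentially. ising_prob A n \<beta>0 B0 (\<lambda>x. \<bar>T_stat A n x\<bar> < \<delta>) \<le> \<epsilon> / 2"
      using assms(6) eps unfolding Theta_p_one_def by (meson half_gt_zero)
    define Mq where "Mq = sqrt (4 * C / \<epsilon>)"
    have Mqpos: "Mq > 0" unfolding Mq_def using Cpos eps by simp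
    have Mq2: "Mq^2 = 4 * C / \<epsilon>" unfolding Mq_def using Cpos eps by simp
    define c0 where "c0 = \<delta> / (1 + 2*\<gamma>^2 + 2*\<delta>)"
    have c0pos: "c0 > 0" unfolding c0_def using dpos g0 by (simp add: add_pos_nonneg)
    define K1 where "K1 = (\<bar>\<beta>0\<bar> + 1) * \<gamma> + \<bar>B0\<bar> + 1"
    define \<kappa> where "\<kappa> = exp (- 2 * K1) * c0"
    have kpos: "\<kappa> > 0" unfolding \<kappa>_def using c0pos by simp
    define M where "M = 6 * Mq / \<kappa>"
    have Mpos: "M > 0" unfolding M_def using Mqpos kpos by simp
    have ev2: "\<forall>\<^sub>F n in sequentially. M^2 \<le> real n \<and> n > 0"
    proof -
      have "\<forall>\<^sub>F n in sequentially. n \<ge> nat \<lceil>M^2\<rceil> + 1" by (rule eventually_ge_at_top)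
      then show ?thesis
      proof (rule eventually_mono)
        fix n :: nat assume "n \<ge> nat \<lceil>M^2\<rceil> + 1"
        then have "real n \<ge> real (nat \<lceil>M^2\<rceil>)" "n > 0" by auto
        moreover have "real (nat \<lceil>M^2\<rceil>) \<ge> M^2" by linarith
        ultimately show "M^2 \<le> real n \<and> n > 0" by linarith
      qed
    qed
    show ?thesis
    proof (rule exI[of _ M], rule eventually_mono[OF eventually_conj[OF ev1 ev2]], elim conjE)
      fix n :: nat
      assume PT: "ising_prob A n \<beta>0 B0 (\<lambda>x. \<bar>T_stat A n x\<bar> < \<delta>) \<le> \<epsilon> / 2"
        and Mn: "M^2 \<le> real n" and npos: "n > 0"
      let ?t = "Mq * sqrt (real n)"
      have tpos: "?t > 0" using Mqpos npos by simp
      have t2: "?t^2 = Mq^2 * n" by (simp add: power_mult_distrib)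
      have PQ: "ising_prob A n \<beta>0 B0 (\<lambda>x. \<bar>Q_pl A n \<beta>0 B0 x\<bar> > ?t) \<le> \<epsilon> / 4"
      proof -
        have "ising_prob A n \<beta>0 B0 (\<lambda>x. \<bar>Q_pl A n \<beta>0 B0 x\<bar> > ?t) \<le> (C * real n) / ?t^2"
          using chebyshev[OF tpos, of A n \<beta>0 B0 "\<lambda>x. Q_pl A n \<beta>0 B0 x"] CQ[of n] tpos
          by (smt (verit) divide_right_mono zero_le_power2)
        also have "\<dots> = \<epsilon> / 4" unfolding t2 Mq2 using npos eps Cpos by (simp add: field_simps)
        finally show ?thesis .
      qed
      have PR: "ising_prob A n \<beta>0 B0 (\<lambda>x. \<bar>R_pl A n \<beta>0 B0 x\<bar> > ?t) \<le> \<epsilon> / 4"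
      proof -
        have "ising_prob A n \<beta>0 B0 (\<lambda>x. \<bar>R_pl A n \<beta>0 B0 x\<bar> > ?t) \<le> (C * real n) / ?t^2"
          using chebyshev[OF tpos, of A n \<beta>0 B0 "\<lambda>x. R_pl A n \<beta>0 B0 x"] CR[of n] tpos
          by (smt (verit) divide_right_mono zero_le_power2)
        also have "\<dots> = \<epsilon> / 4" unfolding t2 Mq2 using npos eps Cpos by (simp add: field_simps)
        finally show ?thesis .
      qed
      define G where "G x \<longleftrightarrow> T_stat A n x \<ge> \<delta> \<and> \<bar>Q_pl A n \<beta>0 B0 x\<bar> \<le> ?t \<and> \<bar>R_pl A n \<beta>0 B0 x\<bar> \<le> ?t" for x
      have good: "mple_exists A n x \<and>
              sqrt ((fst (mple A n x) - \<beta>0)\<^sup>2 + (snd (mple A n x) - B0)\<^sup>2) \<le> M / sqrt (real n)"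
        if x: "x \<in> cfgs n" and Gx: "G x" for x
      proof -
        have xb: "\<And>k. k < n \<Longrightarrow> \<bar>x k\<bar> \<le> 1" using cfgs_abs[OF x] by blast
        have dT: "\<delta> \<le> T_stat A n x" using Gx unfolding G_def by simp
        have cd: "cd \<gamma> \<delta> = c0" unfolding c0_def by (rule cd_def[OF adm C1 g0 npos xb dpos dT])
        define r where "r = M / sqrt (real n)"
        have r0: "r > 0" unfolding r_def using Mpos npos by simp
        have "M \<le> sqrt (real n)" using Mn Mpos by (simp add: real_le_rsqrt)
        then have r1: "r \<le> 1" unfolding r_def using npos by simp
        have S: "sqrt ((Q_pl A n \<beta>0 B0 x)^2 + (R_pl A n \<beta>0 B0 x)^2) < 3 * ?t"
        proof -
          have qa: "\<bar>Q_pl A n \<beta>0 B0 x\<bar> \<le> ?t" and ra: "\<bar>R_pl A n \<beta>0 B0 x\<bar> \<le> ?t"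
            using Gx unfolding G_def by auto
          have "(Q_pl A n \<beta>0 B0 x)^2 \<le> ?t^2" using power_mono[OF qa abs_ge_zero, of 2] by simp
          moreover have "(R_pl A n \<beta>0 B0 x)^2 \<le> ?t^2" using power_mono[OF ra abs_ge_zero, of 2] by simp
          ultimately have "(Q_pl A n \<beta>0 B0 x)^2 + (R_pl A n \<beta>0 B0 x)^2 \<le> 2 * ?t^2" by simp
          then have "(Q_pl A n \<beta>0 B0 x)^2 + (R_pl A n \<beta>0 B0 x)^2 < (3 * ?t)^2"
          proof -
            have "Mq^2 * real n > 0" using Mqpos npos by simp
            then show ?thesis using \<open>(Q_pl A n \<beta>0 B0 x)^2 + (R_pl A n \<beta>0 B0 x)^2 \<le> 2 * ?t^2\<close>
              by (simp add: power_mult_distrib)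
          qed
          then have "sqrt ((Q_pl A n \<beta>0 B0 x)^2 + (R_pl A n \<beta>0 B0 x)^2) < sqrt ((3 * ?t)^2)"
            by (rule real_sqrt_less_mono)
          moreover have "sqrt ((3 * ?t)^2) = 3 * ?t" unfolding real_sqrt_abs using tpos by simp
          ultimately show ?thesis by linarith
        qed
        have eq: "exp (- 2 * K1) * cd \<gamma> \<delta> * real n * r / 2 = 3 * ?t"
        proof -
          have sn: "sqrt (real n) > 0" using npos by simp
          have "exp (- 2 * K1) * cd \<gamma> \<delta> * real n * r / 2 = \<kappa> * real n * (6 * Mq / \<kappa>) / sqrt (real n) / 2"
            unfolding cd \<kappa>_def r_def M_def by simp
          also have "\<dots> = 3 * Mq * (real n / sqrt (real n))" using kpos by (simp add: field_simps)
          also have "real n / sqrt (real n) = sqrt (real n)" using sn by (simp add: real_div_sqrt)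
          finally show ?thesis by simp
        qed
        obtain p where pd: "dist p (\<beta>0, B0) < r" and pr: "Q_pl A n (fst p) (snd p) x = 0 \<and> R_pl A n (fst p) (snd p) x = 0"
          using exists_root[OF adm C1 g0 npos xb dpos dT r0 r1, of \<beta>0 B0] S eq unfolding K1_def by auto
        have uq: "q = p" if "Q_pl A n (fst q) (snd q) x = 0 \<and> R_pl A n (fst q) (snd q) x = 0" for q
          by (rule unique_root[OF adm C1 g0 npos xb dpos dT that pr])
        have ex: "mple_exists A n x" unfolding mple_exists_def using pr uq by blast
        have mp: "mple A n x = p" unfolding mple_def using pr uq by (rule the_equality)
        have "sqrt ((fst (mple A n x) - \<beta>0)\<^sup>2 + (snd (mple A n x) - B0)\<^sup>2) = dist p (\<beta>0, B0)"
          unfolding mp dist_pq by simp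
        then show ?thesis using ex pd unfolding r_def by simp
      qed
      have "ising_prob A n \<beta>0 B0 (\<lambda>x. \<not> G x) \<le>
          ising_prob A n \<beta>0 B0 (\<lambda>x. \<bar>T_stat A n x\<bar> < \<delta> \<or> (\<bar>Q_pl A n \<beta>0 B0 x\<bar> > ?t \<or> \<bar>R_pl A n \<beta>0 B0 x\<bar> > ?t))"
        by (rule prob_mono) (use T_nonneg in \<open>auto simp: G_def\<close>)
      also have "\<dots> \<le> ising_prob A n \<beta>0 B0 (\<lambda>x. \<bar>T_stat A n x\<bar> < \<delta>) +
          ising_prob A n \<beta>0 B0 (\<lambda>x. \<bar>Q_pl A n \<beta>0 B0 x\<bar> > ?t \<or> \<bar>R_pl A n \<beta>0 B0 x\<bar> > ?t)"
        by (rule prob_union)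
      also have "\<dots> \<le> ising_prob A n \<beta>0 B0 (\<lambda>x. \<bar>T_stat A n x\<bar> < \<delta>) +
          (ising_prob A n \<beta>0 B0 (\<lambda>x. \<bar>Q_pl A n \<beta>0 B0 x\<bar> > ?t) + ising_prob A n \<beta>0 B0 (\<lambda>x. \<bar>R_pl A n \<beta>0 B0 x\<bar> > ?t))"
        using prob_union by (rule add_left_mono)
      also have "\<dots> \<le> \<epsilon>" using PT PQ PR by simp
      finally have "ising_prob A n \<beta>0 B0 G \<ge> 1 - \<epsilon>" unfolding prob_compl by simp
      also have "ising_prob A n \<beta>0 B0 G \<le> ising_prob A n \<beta>0 B0 (\<lambda>x. mple_exists A n x \<and>
              sqrt ((fst (mple A n x) - \<beta>0)\<^sup>2 + (snd (mple A n x) - B0)\<^sup>2) \<le> M / sqrt (real n))"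
        by (rule prob_mono) (rule good)
      finally show "ising_prob A n \<beta>0 B0 (\<lambda>x. mple_exists A n x \<and>
              sqrt ((fst (mple A n x) - \<beta>0)\<^sup>2 + (snd (mple A n x) - B0)\<^sup>2) \<le> M / sqrt (real n))
           \<ge> 1 - \<epsilon>" .
    qed
  qed
  have lim: "(\<lambda>n. ising_prob A n \<beta>0 B0 (mple_exists A n)) \<longlonglongrightarrow> 1"
  proof (rule order_tendstoI)
    fix a :: real assume a: "a < 1"
    define \<epsilon> where "\<epsilon> = (1 - a) / 2"
    have "\<epsilon> > 0" using a unfolding \<epsilon>_def by simp
    then obtain M where ev: "\<forall>\<^sub>F n in sequentially.
           ising_prob A n \<beta>0 B0 (\<lambda>x. mple_exists A n x \<and>
              sqrt ((fst (mple A n x) - \<beta>0)\<^sup>2 + (snd (mple A n x) - B0)\<^sup>2) \<le> M / sqrt (real n))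
           \<ge> 1 - \<epsilon>" using main by blast
    show "\<forall>\<^sub>F n in sequentially. a < ising_prob A n \<beta>0 B0 (mple_exists A n)"
    proof (rule eventually_mono[OF ev])
      fix n
      assume h: "ising_prob A n \<beta>0 B0 (\<lambda>x. mple_exists A n x \<and>
              sqrt ((fst (mple A n x) - \<beta>0)\<^sup>2 + (snd (mple A n x) - B0)\<^sup>2) \<le> M / sqrt (real n))
           \<ge> 1 - \<epsilon>"
      have "ising_prob A n \<beta>0 B0 (\<lambda>x. mple_exists A n x \<and>
              sqrt ((fst (mple A n x) - \<beta>0)\<^sup>2 + (snd (mple A n x) - B0)\<^sup>2) \<le> M / sqrt (real n))
         \<le> ising_prob A n \<beta>0 B0 (mple_exists A n)"
        by (rule prob_mono) auto
      with h have "1 - \<epsilon> \<le> ising_prob A n \<beta>0 B0 (mple_exists A n)" by (rule order_trans)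
      moreover have "a < 1 - \<epsilon>" using a unfolding \<epsilon>_def by (simp add: field_simps)
      ultimately show "a < ising_prob A n \<beta>0 B0 (mple_exists A n)" by simp
    qed
  next
    fix a :: real assume "1 < a"
    then show "\<forall>\<^sub>F n in sequentially. ising_prob A n \<beta>0 B0 (mple_exists A n) < a"
      using prob_le1 by (intro always_eventually allI) (meson le_less_trans)
  qed
  show ?thesis using lim main by blast
qed

end
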